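(* \[ \sum_{n=1}^\infty\frac{a_n^2\,H_n^{(3)}}{2n-1}=\frac{2}{\pi}\Big(16G+4\pi-8\pi\log2-\zeta(3)-8\Big). \]
   Context: $a_n=\frac{1}{4^n}\binom{2n}{n}$; $H_n^{(3)}=\sum_{k=1}^n\frac{1}{k^3}$; $G=\sum_{k\ge0}\frac{(-1)^k}{(2k+1)^2}$ is Catalan's constant; $\zeta(3)=\sum_{k\ge1}k^{-3}$. *)

theory Defs
  imports "HOL-Analysis.Analysis"
begin

definition central_binom_norm :: "nat \<Rightarrow> real" where
  "central_binom_norm n = real ((2*n) choose n) / 4 ^ n"

definition harm3 :: "nat \<Rightarrow> real" where
  "harm3 n = (\<Sum>k=1..n. 1 / real k ^ 3)"

definition catalan_G :: real where
  "catalan_G = (\<Sum>k. (-1) ^ k / (2 * real k + 1) ^ 2)"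

definition zeta3 :: real where
  "zeta3 = (\<Sum>k. 1 / real (Suc k) ^ 3)"

end

theory Submission
  imports Defs "HOL-Real_Asymp.Real_Asymp"
begin

abbreviation "cb \<equiv> central_binom_norm"

lemma cb_0[simp]: "cb 0 = 1" by (simp add: central_binom_norm_def)

lemma cb_Suc: "cb (Suc n) = cb n * (2 * real n + 1) / (2 * real n + 2)"
proof -
  define B where "B = (2 * Suc n) choose Suc n"
  define D where "D = (2*n+1) choose n"
  define C where "C = (2*n) choose n"
  have h1: "Suc n * B = (2 * Suc n) * D"
    using Suc_times_binomial_eq[of "2*n+1" n] unfolding B_def D_def by (simp add: mult.commute)
  have h2: "Suc n * D = (2*n+1) * C"
  proof -
    have "D = (2*n+1) choose (Suc n)"
      using binomial_symmetric[of n "2*n+1"] unfolding D_def by simp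
    moreover have "Suc n * ((2*n+1) choose Suc n) = (2*n+1) * ((2*n) choose n)"
      using Suc_times_binomial_eq[of "2*n" n] by (simp add: mult.commute)
    ultimately show ?thesis unfolding C_def by simp
  qed
  have r1: "real B = 2 * real D"
  proof -
    have "real (Suc n) * real B = real (Suc n) * (2 * real D)"
      using arg_cong[OF h1, of real] by (simp only: of_nat_mult)
    then show ?thesis by (metis mult_cancel_left of_nat_eq_0_iff nat.distinct(1))
  qed
  have r2: "(real n + 1) * real D = (2 * real n + 1) * real C"
    using arg_cong[OF h2, of real] by (simp add: algebra_simps)
  have "cb (Suc n) = real B / (4 * 4 ^ n)" unfolding central_binom_norm_def B_def by simp
  also have "\<dots> = 2 * real D / (4 * 4 ^ n)" using r1 by simp
  also have "\<dots> = 2 * ((2 * real n + 1) * real C / (real n + 1)) / (4 * 4 ^ n)"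
    using r2 by (simp add: eq_divide_eq mult.commute)
  also have "\<dots> = cb n * (2 * real n + 1) / (2 * real n + 2)"
    unfolding central_binom_norm_def C_def
    by (simp add: divide_simps; simp add: algebra_simps)
  finally show ?thesis .
qed

lemma cb_pos: "cb n > 0" by (simp add: central_binom_norm_def)

definition cc :: "nat \<Rightarrow> real" where "cc k = (2 * real k + 1) * cb k ^ 2"

lemma cc_step: "cc j - cc (Suc j) = cb (Suc j) ^ 2 / (2 * real (Suc j) - 1)"
proof -
  have p: "2 * real j + 2 \<noteq> 0" "2 * real j + 1 \<noteq> 0" by linarith+
  show ?thesis unfolding cc_def cb_Suc using p
    by (simp add: divide_simps power2_eq_square; simp add: algebra_simps)
qed

lemma cc_0[simp]: "cc 0 = 1" by (simp add: cc_def)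

lemma cc_Suc: "cc (Suc k) = cc k * ((2 * real k + 1) * (2 * real k + 3) / (2 * real k + 2)^2)"
proof -
  have p: "2 * real k + 2 \<noteq> 0" "2 * real k + 1 \<noteq> 0" by linarith+
  show ?thesis unfolding cc_def cb_Suc using p
    by (simp add: divide_simps power2_eq_square; simp add: algebra_simps)
qed

lemma cc_wallis: "cc k * (\<Prod>j=1..k. 4 * real j ^ 2 / (4 * real j ^ 2 - 1)) = 1"
proof (induction k)
  case 0 then show ?case by simp
next
  case (Suc k)
  have p: "2 * real k + 2 \<noteq> 0" "2 * real k + 1 \<noteq> 0" "2 * real k + 3 \<noteq> 0" by linarith+
  have q: "4 * real (Suc k) ^ 2 / (4 * real (Suc k) ^ 2 - 1) = (2 * real k + 2)^2 / ((2 * real k + 1) * (2 * real k + 3))"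
    by (simp add: power2_eq_square algebra_simps)
  let ?F = "\<lambda>j. 4 * real j ^ 2 / (4 * real j ^ 2 - 1)"
  have pr: "(\<Prod>j=1..Suc k. ?F j) = ?F (Suc k) * (\<Prod>j=1..k. ?F j)"
    by (rule prod.nat_ivl_Suc') simp
  have r: "((2 * real k + 1) * (2 * real k + 3) / (2 * real k + 2)^2) * ?F (Suc k) = 1"
  proof -
    have nz1: "(2 * real k + 1) * (2 * real k + 3) \<noteq> 0" using p by simp
    have nz2: "(2 * real k + 2)^2 \<noteq> 0" using p by simp
    show ?thesis unfolding q using nz1 nz2 by (simp add: divide_simps)
  qed
  have "cc (Suc k) * (\<Prod>j=1..Suc k. ?F j)
     = (cc k * (\<Prod>j=1..k. ?F j)) * (((2 * real k + 1) * (2 * real k + 3) / (2 * real k + 2)^2) * ?F (Suc k))"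
    unfolding pr cc_Suc by (simp only: mult_ac)
  also have "\<dots> = 1" using Suc r by simp
  finally show ?case .
qed

lemma cc_lim: "cc \<longlonglongrightarrow> 2 / pi"
proof -
  have "(\<lambda>k. inverse (\<Prod>j=1..k. 4 * real j ^ 2 / (4 * real j ^ 2 - 1))) \<longlonglongrightarrow> inverse (pi / 2)"
    by (rule tendsto_inverse[OF wallis]) simp
  moreover have "(\<lambda>k. inverse (\<Prod>j=1..k. 4 * real j ^ 2 / (4 * real j ^ 2 - 1))) = cc"
  proof
    fix k show "inverse (\<Prod>j=1..k. 4 * real j ^ 2 / (4 * real j ^ 2 - 1)) = cc k"
      using cc_wallis[of k] by (simp add: inverse_unique mult.commute)
  qed
  ultimately show ?thesis by simp
qed

lemma sumA: "(\<Sum>n<N. cb (Suc n)^2 / (2 * real (Suc n) - 1)) = 1 - cc N"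
proof (induction N)
  case 0 then show ?case by simp
next
  case (Suc N) then show ?case using cc_step[of N] by simp
qed

lemma harm3_Suc: "harm3 (Suc N) = harm3 N + 1 / real (Suc N) ^ 3"
  unfolding harm3_def by simp

lemma partial: "(\<Sum>m<N. cb (Suc m)^2 * harm3 (Suc m) / (2 * real (Suc m) - 1))
   = (\<Sum>k<N. cc k / real (Suc k) ^ 3) - cc N * harm3 N"
proof (induction N)
  case 0 then show ?case by (simp add: harm3_def)
next
  case (Suc N)
  have "(\<Sum>m<Suc N. cb (Suc m)^2 * harm3 (Suc m) / (2 * real (Suc m) - 1))
     = (\<Sum>k<N. cc k / real (Suc k) ^ 3) - cc N * harm3 N + harm3 (Suc N) * (cc N - cc (Suc N))"
    using Suc cc_step[of N] by simp
  also have "\<dots> = (\<Sum>k<Suc N. cc k / real (Suc k) ^ 3) - cc (Suc N) * harm3 (Suc N)"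
    unfolding harm3_Suc by (simp add: algebra_simps diff_divide_distrib)
  finally show ?case .
qed

lemma cc_div: "cc k / real (Suc k) ^ 3 = 8 * (cb (Suc k)^2 / (2 * real (Suc k) - 1)) - 4 * (cb (Suc k)^2 / real (Suc k))"
proof -
  have p: "2 * real k + 2 \<noteq> 0" "2 * real k + 1 \<noteq> 0" "real k + 1 \<noteq> 0" by linarith+
  show ?thesis unfolding cc_def cb_Suc using p
    by (simp add: divide_simps power2_eq_square power3_eq_cube; simp add: algebra_simps)
qed

lemma harm3_lim: "harm3 \<longlonglongrightarrow> zeta3"
proof -
  have "summable (\<lambda>k. 1 / real (Suc k) ^ 3)"
    using summable_Suc_iff[of "\<lambda>k. 1 / real k ^ 3"] inverse_power_summable[of 3, where 'a=real]
    by (simp add: divide_inverse)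
  then have "(\<lambda>N. \<Sum>k<N. 1 / real (Suc k) ^ 3) \<longlonglongrightarrow> zeta3"
    unfolding zeta3_def using summable_LIMSEQ by blast
  moreover have "(\<Sum>k<N. 1 / real (Suc k) ^ 3) = harm3 N" for N
    unfolding harm3_def by (induction N) auto
  ultimately show ?thesis by simp
qed


lemma cb_gchoose: "cb k = (-1)^k * ((-1/2 :: real) gchoose k)"
proof (induction k)
  case 0 then show ?case by simp
next
  case (Suc k)
  have m: "(-1/2::real) * ((-1/2) gchoose k) = real k * ((-1/2) gchoose k) + real (Suc k) * ((-1/2) gchoose (Suc k))"
    by (rule gbinomial_mult_1)
  have q: "((-1/2::real) gchoose (Suc k)) = ((-1/2) - real k) * ((-1/2) gchoose k) / real (Suc k)"
    using m by (simp add: field_simps del: of_nat_Suc)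
  show ?case unfolding cb_Suc Suc.IH q
    by (simp add: field_simps)
qed

lemma binom_series:
  assumes "0 \<le> z" "z < (1::real)"
  shows "(\<lambda>k. cb k * z ^ k) sums (1 - z) powr (-1/2)"
proof -
  have "(\<lambda>n. ((-1/2::real) gchoose n) * (-z)^n) sums (1 + - z) powr (-1/2)"
    by (rule gen_binomial_real) (use assms in auto)
  moreover have "((-1/2::real) gchoose n) * (-z)^n = cb n * z ^ n" for n
    unfolding cb_gchoose by (simp add: power_minus' algebra_simps)
  ultimately show ?thesis by simp
qed

lemma wallis_int: "((\<lambda>t. sin t ^ (2*k)) has_integral (pi/2 * cb k)) {0..pi/2}"
proof (induction k)
  case 0 then show ?case using has_integral_const_real[of "1::real" 0 "pi/2"] by simp
next
  case (Suc k)
  define F where "F t = - (sin t ^ (2*k+1) * cos t)" for t :: real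
  have d: "(F has_vector_derivative ((2*real k+2) * sin t ^ (2*k+2) - (2*real k+1) * sin t ^ (2*k))) (at t within {0..pi/2})" for t
  proof -
    define m where "m = 2*k+1"
    have Fm: "F = (\<lambda>t. - (sin t ^ m * cos t))" unfolding F_def m_def by simp
    have "(F has_real_derivative (- ((real m * sin t ^ (m - 1) * cos t) * cos t + sin t ^ m * (- sin t)))) (at t within {0..pi/2})"
      unfolding Fm by (auto intro!: derivative_eq_intros)
    moreover have "m - 1 = 2*k" "real m = real (2*k+1)" unfolding m_def by auto
    ultimately have "(F has_real_derivative (- ((real (2*k+1) * sin t ^ (2*k) * cos t) * cos t + sin t ^ (2*k+1) * (- sin t)))) (at t within {0..pi/2})"
      unfolding m_def by simp
    moreover have "- ((real (2*k+1) * sin t ^ (2*k) * cos t) * cos t + sin t ^ (2*k+1) * (- sin t))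
        = (2*real k+2) * sin t ^ (2*k+2) - (2*real k+1) * sin t ^ (2*k)"
    proof -
      have c: "cos t * cos t = 1 - sin t * sin t" using sin_squared_eq[of t] by (simp add: power2_eq_square)
      have "- ((real (2*k+1) * sin t ^ (2*k) * cos t) * cos t + sin t ^ (2*k+1) * (- sin t))
          = - (real (2*k+1) * sin t ^ (2*k) * (cos t * cos t)) + sin t ^ (2*k) * (sin t * sin t)"
        by (simp add: algebra_simps)
      also have "\<dots> = (2*real k+2) * (sin t ^ (2*k) * (sin t * sin t)) - (2*real k+1) * sin t ^ (2*k)"
        unfolding c by (simp add: algebra_simps)
      also have "sin t ^ (2*k) * (sin t * sin t) = sin t ^ (2*k+2)" by (simp add: power_add power2_eq_square)
      finally show ?thesis .
    qed
    ultimately show ?thesis by (simp add: has_real_derivative_iff_has_vector_derivative)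
  qed
  have I1: "((\<lambda>t. (2*real k+2) * sin t ^ (2*k+2) - (2*real k+1) * sin t ^ (2*k)) has_integral (F (pi/2) - F 0)) {0..pi/2}"
    by (rule fundamental_theorem_of_calculus) (use d in auto)
  have F0: "F (pi/2) - F 0 = 0" unfolding F_def by simp
  have I2: "((\<lambda>t. (2*real k+1) * sin t ^ (2*k)) has_integral ((2*real k+1) * (pi/2 * cb k))) {0..pi/2}"
    using has_integral_mult_right[OF Suc.IH] by simp
  have I3: "((\<lambda>t. (2*real k+2) * sin t ^ (2*k+2)) has_integral ((2*real k+1) * (pi/2 * cb k))) {0..pi/2}"
    using has_integral_add[OF I1 I2] unfolding F0 by simp
  have I4: "((\<lambda>t. sin t ^ (2*k+2)) has_integral ((2*real k+1) * (pi/2 * cb k)) / (2*real k+2)) {0..pi/2}"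
    using has_integral_mult_right[OF I3, of "1/(2*real k+2)"] by simp
  have v: "((2*real k+1) * (pi/2 * cb k)) / (2*real k+2) = pi/2 * cb (Suc k)"
    unfolding cb_Suc by simp
  have e: "(\<lambda>t. sin t ^ (2 * Suc k)) = (\<lambda>t. sin t ^ (2*k+2))" by simp
  show ?case unfolding e using I4 unfolding v .
qed

lemma enn_sums:
  assumes "\<And>k. 0 \<le> f k" "(\<Sum>k. ennreal (f k)) = ennreal V" "0 \<le> V"
  shows "f sums V"
proof -
  have sm: "summable f" using assms(1) by (rule summable_suminf_not_top) (simp add: assms(2))
  have "ennreal (suminf f) = ennreal V" using suminf_ennreal2[OF assms(1) sm] assms(2) by simp
  then have "suminf f = V" using assms(3) suminf_nonneg[OF sm assms(1)] by simp
  then show ?thesis using sm summable_sums by blast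
qed

lemma enn_sum_ind:
  assumes "\<And>x. x \<in> S \<Longrightarrow> (\<lambda>k. f k x) sums g x" "\<And>k x. x \<in> S \<Longrightarrow> 0 \<le> f k x"
  shows "(\<Sum>k. ennreal (f k x) * indicator S x) = ennreal (g x) * indicator S x"
proof (cases "x \<in> S")
  case True
  have "(\<Sum>k. ennreal (f k x)) = ennreal (g x)"
    by (rule suminf_ennreal_eq) (use True assms in auto)
  then show ?thesis using True by simp
next
  case False then show ?thesis by simp
qed

lemma pow_int: "((\<lambda>u. u ^ k) has_integral (1 / real (Suc k))) {0..1::real}"
proof -
  have d: "((\<lambda>u. u ^ Suc k / real (Suc k)) has_vector_derivative u ^ k) (at u within {0..1})" for u :: real
  proof -
    have "((\<lambda>u. u ^ Suc k / real (Suc k)) has_real_derivative (real (Suc k) * (u ^ (Suc k - Suc 0))) / real (Suc k)) (at u within {0..1})"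
      by (rule DERIV_cdivide[OF DERIV_pow])
    then show ?thesis by (simp add: has_real_derivative_iff_has_vector_derivative)
  qed
  have "((\<lambda>u. u ^ k) has_integral ((\<lambda>u. u ^ Suc k / real (Suc k)) 1 - (\<lambda>u. u ^ Suc k / real (Suc k)) 0)) {0..1::real}"
    by (rule fundamental_theorem_of_calculus) (use d in auto)
  then show ?thesis by simp
qed

lemma g_series:
  assumes s: "0 \<le> s" "s < (1::real)" and u: "0 \<le> u" "u \<le> 1"
  shows "(\<lambda>k. cb (Suc k) * s ^ Suc k * u ^ k) sums (s / (sqrt (1 - s*u) * (1 + sqrt (1 - s*u))))"
proof (cases "u = 0")
  case True
  have "(\<lambda>k. (cb (Suc k) * s ^ Suc k) * 0 ^ k) sums (cb (Suc 0) * s ^ Suc 0)" by (rule powser_sums_zero)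
  then show ?thesis using True by (simp add: cb_Suc)
next
  case False
  then have up: "u > 0" using u by simp
  define z where "z = s * u"
  have z1: "0 \<le> z" unfolding z_def using s u by simp
  have "z \<le> s" unfolding z_def using s u by (simp add: mult_left_le)
  then have z: "0 \<le> z" "z < 1" using z1 s by auto
  have "(\<lambda>k. cb k * z ^ k) sums (1 - z) powr (-1/2)" by (rule binom_series[OF z])
  then have "(\<lambda>k. cb (Suc k) * z ^ Suc k) sums ((1 - z) powr (-1/2) - cb 0 * z ^ 0)"
    using sums_Suc_iff[of "\<lambda>k. cb k * z ^ k"] by simp
  then have S: "(\<lambda>k. cb (Suc k) * z ^ Suc k / u) sums (((1 - z) powr (-1/2) - 1) / u)"
    by (intro sums_divide) simp
  have eq: "(\<lambda>k. cb (Suc k) * z ^ Suc k / u) = (\<lambda>k. cb (Suc k) * s ^ Suc k * u ^ k)"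
  proof
    fix k
    have "cb (Suc k) * z ^ Suc k / u = cb (Suc k) * s ^ Suc k * (u ^ Suc k / u)"
      unfolding z_def power_mult_distrib by simp
    also have "u ^ Suc k / u = u ^ k" using up by simp
    finally show "cb (Suc k) * z ^ Suc k / u = cb (Suc k) * s ^ Suc k * u ^ k" .
  qed
  have V: "((1 - z) powr (-1/2) - 1) / u = s / (sqrt (1 - s*u) * (1 + sqrt (1 - s*u)))"
  proof -
    define r where "r = sqrt (1 - z)"
    have rp: "r > 0" unfolding r_def using z by simp
    have r2: "r * r = 1 - z" unfolding r_def using z by simp
    have "(1 - z) powr (-1/2) = (1 - z) powr (- (1/2))" by simp
    also have "\<dots> = 1 / (1 - z) powr (1/2)" by (rule powr_minus_divide)
    also have "\<dots> = 1 / r" unfolding r_def using z by (simp add: powr_half_sqrt)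
    finally have p: "(1 - z) powr (-1/2) = 1 / r" .
    have "((1 - z) powr (-1/2) - 1) / u = (1 - r) / (r * u)" unfolding p using rp up
      by (simp add: divide_simps)
    also have "\<dots> = s / (r * (1 + r))"
    proof -
      have m: "(1 - r) * (1 + r) = s * u" using r2 unfolding z_def by (simp add: algebra_simps)
      have "(1 - r) / (r * u) = ((1 - r) * (1 + r)) / (r * u * (1 + r))" using rp by simp
      also have "\<dots> = s / (r * (1 + r))" unfolding m using up rp by simp
      finally show ?thesis .
    qed
    finally show ?thesis unfolding r_def z_def .
  qed
  show ?thesis using S unfolding eq V .
qed

lemma g_int:
  assumes s: "0 \<le> s" "s < (1::real)"
  shows "((\<lambda>u. s / (sqrt (1 - s*u) * (1 + sqrt (1 - s*u)))) has_integral (2 * ln 2 - 2 * ln (1 + sqrt (1 - s)))) {0..1}"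
proof -
  define G where "G u = - 2 * ln (1 + sqrt (1 - s*u))" for u :: real
  have pos: "1 - s*u > 0" if "u \<in> {0..1}" for u
  proof -
    have "s * u \<le> s" using that s by (simp add: mult_left_le)
    then show ?thesis using s by simp
  qed
  have d: "(G has_vector_derivative (s / (sqrt (1 - s*u) * (1 + sqrt (1 - s*u))))) (at u within {0..1})"
    if "u \<in> {0..1}" for u
  proof -
    have p: "1 - s*u > 0" using pos[OF that] .
    have sp: "sqrt (1 - s*u) > 0" using p by simp
    have sq: "sqrt (1 - s*u) * sqrt (1 - s*u) = 1 - s*u" using p by simp
    have "(G has_real_derivative (- 2 * ((inverse (sqrt (1 - s*u)) / 2 * (- s)) / (1 + sqrt (1 - s*u))))) (at u within {0..1})"
      unfolding G_def using p sp
      by (auto intro!: derivative_eq_intros simp: add_pos_pos mult_ac)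
    moreover have "- 2 * ((inverse (sqrt (1 - s*u)) / 2 * (- s)) / (1 + sqrt (1 - s*u))) = s / (sqrt (1 - s*u) * (1 + sqrt (1 - s*u)))"
      using sp by (simp add: divide_simps)
    ultimately show ?thesis by (simp add: has_real_derivative_iff_has_vector_derivative)
  qed
  have "((\<lambda>u. s / (sqrt (1 - s*u) * (1 + sqrt (1 - s*u)))) has_integral (G 1 - G 0)) {0..1}"
    by (rule fundamental_theorem_of_calculus) (use d in auto)
  moreover have "G 1 - G 0 = 2 * ln 2 - 2 * ln (1 + sqrt (1 - s))" unfolding G_def by simp
  ultimately show ?thesis by simp
qed

lemma h_series:
  assumes s: "0 \<le> s" "s < (1::real)"
  shows "(\<lambda>k. cb (Suc k) * s ^ Suc k / real (Suc k)) sums (2 * ln 2 - 2 * ln (1 + sqrt (1 - s)))"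
proof -
  let ?g = "\<lambda>u. s / (sqrt (1 - s*u) * (1 + sqrt (1 - s*u)))"
  let ?V = "2 * ln 2 - 2 * ln (1 + sqrt (1 - s))"
  have gnn: "0 \<le> ?g u" if "u \<in> {0..1}" for u
  proof -
    have "s * u \<le> s" using that s by (simp add: mult_left_le)
    then have "1 - s*u \<ge> 0" using s by simp
    then show ?thesis using s by (simp add: add_nonneg_nonneg)
  qed
  have tnn: "0 \<le> cb (Suc k) * s ^ Suc k * u ^ k" if "u \<in> {0..1}" for k u
    using that s cb_pos[of "Suc k"] by simp
  have Ik: "(\<integral>\<^sup>+u. ennreal (cb (Suc k) * s ^ Suc k * u ^ k) * indicator {0..1} u \<partial>lborel)
       = ennreal (cb (Suc k) * s ^ Suc k / real (Suc k))" for k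
  proof -
    have "((\<lambda>u. cb (Suc k) * s ^ Suc k * u ^ k) has_integral (cb (Suc k) * s ^ Suc k * (1 / real (Suc k)))) {0..1}"
      using has_integral_mult_right[OF pow_int[of k], of "cb (Suc k) * s ^ Suc k"] by simp
    from nn_integral_has_integral_lebesgue'[OF tnn this] show ?thesis by simp
  qed
  have "(\<Sum>k. ennreal (cb (Suc k) * s ^ Suc k / real (Suc k)))
     = (\<Sum>k. \<integral>\<^sup>+u. ennreal (cb (Suc k) * s ^ Suc k * u ^ k) * indicator {0..1} u \<partial>lborel)"
    unfolding Ik ..
  also have "\<dots> = (\<integral>\<^sup>+u. (\<Sum>k. ennreal (cb (Suc k) * s ^ Suc k * u ^ k) * indicator {0..1} u) \<partial>lborel)"
    by (rule nn_integral_suminf[symmetric]) measurable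
  also have "\<dots> = (\<integral>\<^sup>+u. ennreal (?g u) * indicator {0..1} u \<partial>lborel)"
    by (intro nn_integral_cong enn_sum_ind) (use g_series[OF s] tnn in auto)
  also have "\<dots> = ennreal ?V"
    by (rule nn_integral_has_integral_lebesgue'[OF gnn g_int[OF s]])
  finally have e: "(\<Sum>k. ennreal (cb (Suc k) * s ^ Suc k / real (Suc k))) = ennreal ?V" .
  have "0 \<le> ?V" by (rule has_integral_nonneg[OF g_int[OF s]]) (use gnn in auto)
  moreover have "0 \<le> cb (Suc k) * s ^ Suc k / real (Suc k)" for k
    using cb_pos[of "Suc k"] s by simp
  ultimately show ?thesis using e by (intro enn_sums) auto
qed

lemma xlnx_cont: "continuous_on {0..1} (\<lambda>y::real. y ^ Suc m * ln y)"
proof -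
  have "continuous (at x within {0..1}) (\<lambda>y::real. y ^ Suc m * ln y)" if x: "x \<in> {0..1}" for x
  proof (cases "x = 0")
    case True
    have l: "((\<lambda>y::real. y * ln y) \<longlongrightarrow> 0) (at_right 0)" by real_asymp
    have "((\<lambda>y::real. y ^ m * (y * ln y)) \<longlongrightarrow> 0 ^ m * 0) (at_right 0)"
      by (intro tendsto_intros l)
    then have "((\<lambda>y::real. y ^ Suc m * ln y) \<longlongrightarrow> 0) (at_right 0)"
      by (simp add: mult_ac)
    then have "((\<lambda>y::real. y ^ Suc m * ln y) \<longlongrightarrow> 0) (at 0 within {0..1})"
      by (simp add: at_within_Icc_at_right)
    then show ?thesis using True by (simp add: continuous_within)
  next
    case False
    then have "x > 0" using x by simp
    then have "continuous (at x) (\<lambda>y::real. y ^ Suc m * ln y)"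
      by (intro continuous_intros) auto
    then show ?thesis using continuous_at_imp_continuous_at_within by blast
  qed
  then show ?thesis using continuous_on_eq_continuous_within by blast
qed

lemma moment_ln: "((\<lambda>x::real. x ^ m * (- ln x)) has_integral (1 / real (Suc m) ^ 2)) {0..1}"
proof -
  define F where "F y = y ^ Suc m / real (Suc m) ^ 2 - y ^ Suc m * ln y / real (Suc m)" for y :: real
  have c: "continuous_on {0..1} F" unfolding F_def
    by (intro continuous_intros xlnx_cont) auto
  have d: "(F has_vector_derivative (x ^ m * (- ln x))) (at x)" if "x \<in> {0<..<1}" for x
  proof -
    have xp: "x > 0" using that by simp
    have d1: "((\<lambda>y. y ^ Suc m) has_real_derivative real (Suc m) * x ^ m) (at x)"
      using DERIV_pow[of "Suc m" x UNIV] by simp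
    have d2: "(ln has_real_derivative inverse x) (at x)" using DERIV_ln xp by blast
    have "(F has_real_derivative (real (Suc m) * x ^ m / real (Suc m) ^ 2
        - (real (Suc m) * x ^ m * ln x + inverse x * x ^ Suc m) / real (Suc m))) (at x)"
      unfolding F_def
      by (intro DERIV_diff DERIV_cdivide DERIV_mult d1 d2)
    moreover have "real (Suc m) * x ^ m / real (Suc m) ^ 2
        - (real (Suc m) * x ^ m * ln x + inverse x * x ^ Suc m) / real (Suc m) = x ^ m * (- ln x)"
    proof -
      have "inverse x * x ^ Suc m = x ^ m" using xp by (simp add: field_simps)
      moreover have "real (Suc m) \<noteq> 0" by simp
      ultimately show ?thesis by (simp add: power2_eq_square divide_simps; simp add: algebra_simps)
    qed
    ultimately show ?thesis by (simp add: has_real_derivative_iff_has_vector_derivative)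
  qed
  have "((\<lambda>x::real. x ^ m * (- ln x)) has_integral (F 1 - F 0)) {0..1}"
    by (rule fundamental_theorem_of_calculus_interior) (use c d in auto)
  moreover have "F 1 - F 0 = 1 / real (Suc m) ^ 2" unfolding F_def by simp
  ultimately show ?thesis by simp
qed

lemma catalan_pairs: "(\<lambda>j. 1 / real (4*j+1) ^ 2 - 1 / real (4*j+3) ^ 2) sums catalan_G"
proof -
  let ?f = "\<lambda>k::nat. (-1) ^ k / (2 * real k + 1) ^ 2"
  have s1: "summable (\<lambda>k. 1 / real (Suc k) ^ 2)"
    using summable_Suc_iff[of "\<lambda>k. 1 / real k ^ 2"] inverse_power_summable[of 2, where 'a=real]
    by (simp add: divide_inverse)
  have "summable (\<lambda>k. norm (?f k))"
  proof (rule summable_comparison_test'[OF s1])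
    fix k :: nat assume "k \<ge> 0"
    have "real (Suc k) ^ 2 \<le> (2 * real k + 1) ^ 2" by (intro power_mono) auto
    then show "norm (norm (?f k)) \<le> 1 / real (Suc k) ^ 2"
      by (simp add: power_abs divide_simps)
  qed
  then have "summable ?f" by (rule summable_norm_cancel)
  then have "?f sums catalan_G" unfolding catalan_G_def by (rule summable_sums)
  from sums_group[OF this, of 2]
  have "(\<lambda>n. sum ?f {n * 2..<n * 2 + 2}) sums catalan_G" by simp
  moreover have "sum ?f {n * 2..<n * 2 + 2} = 1 / real (4*n+1) ^ 2 - 1 / real (4*n+3) ^ 2" for n
  proof -
    have "{n * 2..<n * 2 + 2} = {2*n, 2*n+1}" by auto
    then have "sum ?f {n * 2..<n * 2 + 2} = ?f (2*n) + ?f (2*n+1)" by simp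
    also have "\<dots> = 1 / real (4*n+1) ^ 2 - 1 / real (4*n+3) ^ 2"
    proof -
      have a: "(-1::real)^(2*n) = 1" "(-1::real)^(2*n+1) = -1" by (simp_all add: power_mult)
      have b: "2 * real (2*n) + 1 = real (4*n+1)" "2 * real (2*n+1) + 1 = real (4*n+3)" by simp_all
      show ?thesis unfolding a b by simp
    qed
    finally show ?thesis .
  qed
  ultimately show ?thesis by simp
qed

lemma ln_series_int:
  assumes x: "x \<in> {0..1::real}"
  shows "(\<lambda>j. (x ^ (4*j) - x ^ (4*j+2)) * (- ln x)) sums (- ln x / (1 + x^2))"
proof (cases "x = 1")
  case True then show ?thesis by simp
next
  case False
  then have x1: "0 \<le> x" "x < 1" using x by auto
  have n: "norm (x^4) < 1" using x1 by (simp add: power_less_one_iff abs_if)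
  have S: "(\<lambda>j. (x^4) ^ j * ((1 - x^2) * (- ln x))) sums (1 / (1 - x^4) * ((1 - x^2) * (- ln x)))"
    by (rule sums_mult2[OF geometric_sums[OF n]])
  have E: "(\<lambda>j. (x^4) ^ j * ((1 - x^2) * (- ln x))) = (\<lambda>j. (x ^ (4*j) - x ^ (4*j+2)) * (- ln x))"
  proof (rule ext)
    fix j
    show "(x^4) ^ j * ((1 - x^2) * (- ln x)) = (x ^ (4*j) - x ^ (4*j+2)) * (- ln x)"
  proof -
    have p1: "(x^4)^j = x^(4*j)" by (rule power_mult[symmetric])
    have p2: "x^(4*j+2) = x^(4*j) * x^2" by (rule power_add)
    show ?thesis by (simp only: p1 p2) (simp add: algebra_simps)
  qed
  qed
  have V: "1 / (1 - x^4) * ((1 - x^2) * (- ln x)) = - ln x / (1 + x^2)"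
  proof -
    have f: "1 - x^4 = (1 - x^2) * (1 + x^2)" by (simp add: algebra_simps power2_eq_square power4_eq_xxxx)
    have "1 - x^2 \<noteq> 0" using x1 by (simp add: power2_eq_square) (metis less_irrefl mult_less_cancel_right1 x1(1) mult_le_one less_le_not_le)
    moreover have "1 + x^2 \<noteq> 0" by (metis add_pos_nonneg less_numeral_extra(1) zero_le_power2 order_less_irrefl)
    ultimately show ?thesis unfolding f by (simp add: divide_simps)
  qed
  show ?thesis using S unfolding E V .
qed

lemma Gn: "(\<integral>\<^sup>+x. ennreal (- ln x / (1 + x^2)) * indicator {0..1} x \<partial>lborel) = ennreal catalan_G"
proof -
  let ?t = "\<lambda>j (x::real). (x ^ (4*j) - x ^ (4*j+2)) * (- ln x)"
  have tnn: "0 \<le> ?t j x" if "x \<in> {0..1}" for j x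
  proof -
    have "x ^ (4*j+2) \<le> x ^ (4*j)" by (rule power_decreasing) (use that in auto)
    moreover have "0 \<le> - ln x" using that by (cases "x = 0") auto
    ultimately show ?thesis by (intro mult_nonneg_nonneg) simp_all
  qed
  have gnn: "0 \<le> - ln x / (1 + x^2)" if "x \<in> {0..1}" for x :: real
  proof -
    have "0 \<le> - ln x" using that by (cases "x = 0") auto
    moreover have "0 < 1 + x^2" by (simp add: add_pos_nonneg)
    ultimately show ?thesis by (rule divide_nonneg_pos)
  qed
  have Ij: "(\<integral>\<^sup>+x. ennreal (?t j x) * indicator {0..1} x \<partial>lborel)
     = ennreal (1 / real (4*j+1) ^ 2 - 1 / real (4*j+3) ^ 2)" for j
  proof -
    have I0: "((\<lambda>x. x ^ (4*j) * (- ln x) - x ^ (4*j+2) * (- ln x)) has_integral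
        (1 / real (Suc (4*j)) ^ 2 - 1 / real (Suc (4*j+2)) ^ 2)) {0..1}"
      by (intro has_integral_diff moment_ln)
    have E: "(\<lambda>x. x ^ (4*j) * (- ln x) - x ^ (4*j+2) * (- ln x)) = ?t j"
      by (rule ext) (simp add: algebra_simps)
    have R: "real (Suc (4*j)) = real (4*j+1)" "real (Suc (4*j+2)) = real (4*j+3)" by simp_all
    have "(?t j has_integral (1 / real (4*j+1) ^ 2 - 1 / real (4*j+3) ^ 2)) {0..1}"
      using I0 unfolding E R .
    from nn_integral_has_integral_lebesgue'[OF tnn this] show ?thesis by simp
  qed
  have pnn: "0 \<le> 1 / real (4*j+1) ^ 2 - 1 / real (4*j+3) ^ 2" for j
    by (simp add: divide_simps power_mono)
  have "ennreal catalan_G = (\<Sum>j. ennreal (1 / real (4*j+1) ^ 2 - 1 / real (4*j+3) ^ 2))"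
    by (rule suminf_ennreal_eq[symmetric, OF pnn catalan_pairs])
  also have "\<dots> = (\<Sum>j. \<integral>\<^sup>+x. ennreal (?t j x) * indicator {0..1} x \<partial>lborel)"
    unfolding Ij ..
  also have "\<dots> = (\<integral>\<^sup>+x. (\<Sum>j. ennreal (?t j x) * indicator {0..1} x) \<partial>lborel)"
    by (rule nn_integral_suminf[symmetric]) measurable
  also have "\<dots> = (\<integral>\<^sup>+x. ennreal (- ln x / (1 + x^2)) * indicator {0..1} x \<partial>lborel)"
    by (intro nn_integral_cong enn_sum_ind) (use ln_series_int tnn in auto)
  finally show ?thesis ..
qed

definition LL :: "(real \<Rightarrow> real) \<Rightarrow> real set \<Rightarrow> ennreal" where
  "LL f S = (\<integral>\<^sup>+x. ennreal (f x) * indicator S x \<partial>lborel)"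

lemma cos_pos_q: "x \<in> {0..pi/2} \<Longrightarrow> x \<noteq> pi/2 \<Longrightarrow> 0 < cos x"
  by (rule cos_gt_zero_pi) auto

lemma cos_pos_4: assumes "x \<in> {0..pi/4}" shows "0 < cos x"
proof -
  have h: "0 \<le> x" "x \<le> pi/4" using assms by auto
  show ?thesis using h pi_gt_zero by (intro cos_gt_zero_pi) linarith+
qed

lemma tan_01: assumes "x \<in> {0..pi/4}" shows "0 \<le> tan x" "tan x \<le> 1"
proof -
  have c: "0 < cos x" using cos_pos_4[OF assms] .
  have h: "0 \<le> x" "x \<le> pi/4" using assms by auto
  have s: "0 \<le> sin x" using h pi_gt_zero by (intro sin_ge_zero) linarith+
  show "0 \<le> tan x" unfolding tan_def using c s by simp
  have "tan x \<le> tan (pi/4)" using h pi_gt_zero by (intro tan_mono_le) linarith+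
  then show "tan x \<le> 1" by (simp add: tan_45)
qed

lemma LL_tan: "LL (\<lambda>v. - ln (tan v)) {0..pi/4} = ennreal catalan_G"
proof -
  let ?f = "\<lambda>x::real. - ln x / (1 + x^2)"
  let ?g' = "\<lambda>x::real. inverse (cos x ^ 2)"
  have S: "(\<integral>\<^sup>+x. ennreal (?f x * indicator {tan 0..tan (pi/4)} x) \<partial>lborel) =
        (\<integral>\<^sup>+x. ennreal (?f (tan x) * ?g' x * indicator {0..pi/4} x) \<partial>lborel)"
  proof (rule nn_integral_substitution)
    show "set_borel_measurable borel {tan 0..tan (pi/4)} ?f"
      unfolding set_borel_measurable_def by measurable
    show "(tan has_real_derivative ?g' x) (at x)" if "x \<in> {0..pi/4}" for x
      using DERIV_tan[of x] cos_pos_4[OF that] by (simp add: power_inverse)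
    have "\<forall>x\<in>{0..pi/4}. cos x ^ 2 \<noteq> 0" using cos_pos_4 by (metis less_irrefl power_not_zero)
    then show "continuous_on {0..pi/4} ?g'"
      by (intro continuous_on_inverse continuous_intros)
    show "0 \<le> ?g' x" for x by simp
    show "0 \<le> pi/4" by simp
  qed
  have L: "(\<integral>\<^sup>+x. ennreal (?f x * indicator {tan 0..tan (pi/4)} x) \<partial>lborel) = (\<integral>\<^sup>+x. ennreal (?f x) * indicator {0..1} x \<partial>lborel)"
    by (intro nn_integral_cong) (simp add: tan_45 split: split_indicator)
  have R: "(\<integral>\<^sup>+x. ennreal (?f (tan x) * ?g' x * indicator {0..pi/4} x) \<partial>lborel) = LL (\<lambda>v. - ln (tan v)) {0..pi/4}"
    unfolding LL_def
  proof (intro nn_integral_cong)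
    fix x :: real
    show "ennreal (?f (tan x) * ?g' x * indicator {0..pi/4} x) = ennreal (- ln (tan x)) * indicator {0..pi/4} x"
    proof (cases "x \<in> {0..pi/4}")
      case True
      have c: "cos x \<noteq> 0" using cos_pos_4[OF True] by simp
      have "?f (tan x) * ?g' x = - ln (tan x)"
        using tan_sec[OF c] c by (simp add: power_inverse divide_simps)
      then show ?thesis using True by simp
    next
      case False then show ?thesis by simp
    qed
  qed
  show ?thesis using S Gn unfolding L R by simp
qed

lemma tan_meas[measurable]: "(tan :: real \<Rightarrow> real) \<in> borel_measurable borel"
proof -
  have e: "tan = (\<lambda>x::real. sin x / cos x)" by (rule ext) (simp add: tan_def)
  show ?thesis unfolding e by measurable
qed

lemma cos_ne_4: "\<forall>v\<in>{0..pi/4}. cos v \<noteq> 0"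
proof
  fix v :: real assume "v \<in> {0..pi/4}"
  from cos_pos_4[OF this] show "cos v \<noteq> 0" by simp
qed

lemma LL_add:
  assumes "\<And>x. x \<in> S \<Longrightarrow> 0 \<le> f x" "\<And>x. x \<in> S \<Longrightarrow> 0 \<le> g x"
    and [measurable]: "f \<in> borel_measurable borel" "g \<in> borel_measurable borel" "S \<in> sets borel"
  shows "LL (\<lambda>x. f x + g x) S = LL f S + LL g S"
proof -
  have "LL (\<lambda>x. f x + g x) S = (\<integral>\<^sup>+x. ennreal (f x) * indicator S x + ennreal (g x) * indicator S x \<partial>lborel)"
    unfolding LL_def
    by (intro nn_integral_cong) (use assms(1,2) in \<open>auto simp: ennreal_plus split: split_indicator\<close>)
  also have "\<dots> = LL f S + LL g S" unfolding LL_def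
    by (rule nn_integral_add) measurable
  finally show ?thesis .
qed

lemma LL_cong_AE:
  assumes "\<And>x. x \<in> S \<Longrightarrow> x \<noteq> c \<Longrightarrow> f x = g x"
  shows "LL f S = LL g S"
  unfolding LL_def
proof (rule nn_integral_cong_AE)
  show "AE x in lborel. ennreal (f x) * indicator S x = ennreal (g x) * indicator S x"
    using AE_lborel_singleton[of c] by eventually_elim (use assms in \<open>auto split: split_indicator\<close>)
qed

lemma LL_set_AE:
  assumes "\<And>x. x \<noteq> c \<Longrightarrow> x \<in> S \<longleftrightarrow> x \<in> T"
  shows "LL f S = LL f T"
  unfolding LL_def
proof (rule nn_integral_cong_AE)
  show "AE x in lborel. ennreal (f x) * indicator S x = ennreal (f x) * indicator T x"
    using AE_lborel_singleton[of c] by eventually_elim (use assms in \<open>auto split: split_indicator\<close>)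
qed

lemma B_fin: "LL (\<lambda>v. - ln (cos v)) {0..pi/4} = ennreal (integral {0..pi/4} (\<lambda>v. - ln (cos v)))"
  and B_nonneg: "0 \<le> integral {0..pi/4} (\<lambda>v. - ln (cos v))"
proof -
  have nn: "0 \<le> - ln (cos v)" if "v \<in> {0..pi/4}" for v
    using cos_pos_4[OF that] by simp
  have "continuous_on {0..pi/4} (\<lambda>v. - ln (cos v))"
    using cos_ne_4 by (intro continuous_intros) auto
  then have I: "((\<lambda>v. - ln (cos v)) has_integral integral {0..pi/4} (\<lambda>v. - ln (cos v))) {0..pi/4}"
    by (intro integrable_integral integrable_continuous_interval)
  show "LL (\<lambda>v. - ln (cos v)) {0..pi/4} = ennreal (integral {0..pi/4} (\<lambda>v. - ln (cos v)))"
    unfolding LL_def by (rule nn_integral_has_integral_lebesgue'[OF nn I])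
  show "0 \<le> integral {0..pi/4} (\<lambda>v. - ln (cos v))"
    by (rule has_integral_nonneg[OF I]) (use nn in auto)
qed

lemma A_eq: "LL (\<lambda>v. - ln (sin v)) {0..pi/4} = ennreal catalan_G + LL (\<lambda>v. - ln (cos v)) {0..pi/4}"
proof -
  have "LL (\<lambda>v. - ln (sin v)) {0..pi/4} = LL (\<lambda>v. - ln (tan v) + - ln (cos v)) {0..pi/4}"
    unfolding LL_def
  proof (intro nn_integral_cong)
    fix v :: real
    show "ennreal (- ln (sin v)) * indicator {0..pi/4} v = ennreal (- ln (tan v) + - ln (cos v)) * indicator {0..pi/4} v"
    proof (cases "v \<in> {0..pi/4}")
      case True
      have c: "0 < cos v" using cos_pos_4[OF True] .
      have "- ln (sin v) = - ln (tan v) + - ln (cos v)"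
      proof (cases "v = 0")
        case True then show ?thesis by simp
      next
        case False
        then have "0 < v" "v < pi" using \<open>v \<in> {0..pi/4}\<close> pi_gt_zero by auto
        then have "0 < sin v" by (rule sin_gt_zero)
        then show ?thesis unfolding tan_def using c by (simp add: ln_divide_pos)
      qed
      then show ?thesis by simp
    next
      case False then show ?thesis by simp
    qed
  qed
  also have "\<dots> = LL (\<lambda>v. - ln (tan v)) {0..pi/4} + LL (\<lambda>v. - ln (cos v)) {0..pi/4}"
  proof (rule LL_add)
    show "0 \<le> - ln (tan x)" if "x \<in> {0..pi/4}" for x
      using tan_01[OF that] by (cases "tan x = 0") auto
    show "0 \<le> - ln (cos x)" if "x \<in> {0..pi/4}" for x
      using cos_pos_4[OF that] by simp
    show "(\<lambda>v::real. - ln (tan v)) \<in> borel_measurable borel" by measurable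
    show "(\<lambda>v::real. - ln (cos v)) \<in> borel_measurable borel" by measurable
    show "{0..pi/4::real} \<in> sets borel" by simp
  qed
  finally show ?thesis unfolding LL_tan .
qed

lemma nlsin: assumes "w \<in> {0..pi}" shows "0 \<le> - ln (sin w)"
proof (cases "sin w = 0")
  case True then show ?thesis by simp
next
  case False
  have "0 \<le> sin w" using assms by (intro sin_ge_zero) auto
  then have "0 < sin w" using False by simp
  then show ?thesis by simp
qed

lemma P4: "LL (\<lambda>v. - ln (sin v)) {0..pi/4} + LL (\<lambda>v. - ln (cos v)) {0..pi/4}
   = ennreal (ln 2 * (pi/4)) + LL (\<lambda>v. - ln (sin (2 * v))) {0..pi/4}"
proof -
  have sinnn: "0 \<le> - ln (sin v)" if "v \<in> {0..pi/4}" for v :: real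
    using that pi_gt_zero by (intro nlsin) auto
  have cosnn: "0 \<le> - ln (cos v)" if "v \<in> {0..pi/4}" for v :: real
    using cos_pos_4[OF that] by simp
  have sin2nn: "0 \<le> - ln (sin (2 * v))" if "v \<in> {0..pi/4}" for v :: real
    using that pi_gt_zero by (intro nlsin) auto
  have "LL (\<lambda>v. - ln (sin v)) {0..pi/4} + LL (\<lambda>v. - ln (cos v)) {0..pi/4}
      = LL (\<lambda>v. - ln (sin v) + - ln (cos v)) {0..pi/4}"
    by (rule LL_add[symmetric]) (use sinnn cosnn in auto)
  also have "\<dots> = LL (\<lambda>v. ln 2 + - ln (sin (2 * v))) {0..pi/4}"
  proof (rule LL_cong_AE[where c=0])
    fix v :: real assume v: "v \<in> {0..pi/4}" "v \<noteq> 0"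
    then have "0 < v" "v < pi" using pi_gt_zero by auto
    then have s: "0 < sin v" by (rule sin_gt_zero)
    have c: "0 < cos v" using cos_pos_4[OF v(1)] .
    have "sin (2 * v) = 2 * sin v * cos v" by (rule sin_double)
    then have "ln (sin (2 * v)) = ln 2 + ln (sin v) + ln (cos v)"
      using s c by (simp add: ln_mult)
    then show "- ln (sin v) + - ln (cos v) = ln 2 + - ln (sin (2 * v))" by simp
  qed
  also have "\<dots> = LL (\<lambda>v. ln 2) {0..pi/4} + LL (\<lambda>v. - ln (sin (2 * v))) {0..pi/4}"
    by (rule LL_add) (use sin2nn in auto)
  also have "LL (\<lambda>v. ln 2) {0..pi/4} = ennreal (ln 2 * (pi/4))"
  proof -
    have "LL (\<lambda>v. ln 2) {0..pi/4} = ennreal (ln 2) * emeasure lborel {0..pi/4::real}"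
      unfolding LL_def by (rule nn_integral_cmult_indicator) simp
    also have "\<dots> = ennreal (ln 2) * ennreal (pi/4)" using pi_gt_zero by simp
    also have "\<dots> = ennreal (ln 2 * (pi/4))"
      by (rule ennreal_mult[symmetric]) (use pi_gt_zero in auto)
    finally show ?thesis .
  qed
  finally show ?thesis .
qed

lemma P5: "LL (\<lambda>w. - ln (sin w)) {0..pi/2} = 2 * LL (\<lambda>v. - ln (sin (2 * v))) {0..pi/4}"
proof -
  let ?F = "\<lambda>w::real. ennreal (- ln (sin w)) * indicator {0..pi/2} w"
  have "LL (\<lambda>w. - ln (sin w)) {0..pi/2} = (\<integral>\<^sup>+x. ?F x \<partial>lborel)" unfolding LL_def ..
  also have "\<dots> = ennreal 2 * (\<integral>\<^sup>+x. ?F (0 + 2 * x) \<partial>lborel)"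
  proof -
    have m: "?F \<in> borel_measurable borel" by measurable
    show ?thesis using nn_integral_real_affine[OF m, of 2 0] by simp
  qed
  also have "(\<integral>\<^sup>+x. ?F (0 + 2 * x) \<partial>lborel) = LL (\<lambda>v. - ln (sin (2 * v))) {0..pi/4}"
    unfolding LL_def by (intro nn_integral_cong) (auto split: split_indicator)
  finally show ?thesis by simp
qed

lemma P6: "LL (\<lambda>w. - ln (sin w)) {0..pi/2} = LL (\<lambda>w. - ln (sin w)) {0..pi/4} + LL (\<lambda>w. - ln (sin w)) {pi/4<..pi/2}"
proof -
  have "LL (\<lambda>w. - ln (sin w)) {0..pi/2} =
     (\<integral>\<^sup>+x. ennreal (- ln (sin x)) * indicator {0..pi/4} x + ennreal (- ln (sin x)) * indicator {pi/4<..pi/2} x \<partial>lborel)"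
    unfolding LL_def
  proof (intro nn_integral_cong)
    fix x :: real
    have "pi/4 < pi/2" using pi_gt_zero by simp
    then show "ennreal (- ln (sin x)) * indicator {0..pi/2} x =
      ennreal (- ln (sin x)) * indicator {0..pi/4} x + ennreal (- ln (sin x)) * indicator {pi/4<..pi/2} x"
      by (auto split: split_indicator)
  qed
  also have "\<dots> = LL (\<lambda>w. - ln (sin w)) {0..pi/4} + LL (\<lambda>w. - ln (sin w)) {pi/4<..pi/2}"
    unfolding LL_def by (rule nn_integral_add) measurable
  finally show ?thesis .
qed

lemma P7: "LL (\<lambda>w. - ln (sin w)) {pi/4<..pi/2} = LL (\<lambda>v. - ln (cos v)) {0..pi/4}"
proof -
  let ?F = "\<lambda>w::real. ennreal (- ln (sin w)) * indicator {pi/4<..pi/2} w"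
  have m: "?F \<in> borel_measurable borel" by measurable
  have "LL (\<lambda>w. - ln (sin w)) {pi/4<..pi/2} = (\<integral>\<^sup>+x. ?F x \<partial>lborel)" unfolding LL_def ..
  also have "\<dots> = (\<integral>\<^sup>+x. ?F (pi/2 + (-1) * x) \<partial>lborel)"
    using nn_integral_real_affine[OF m, of "-1" "pi/2"] by simp
  also have "\<dots> = LL (\<lambda>v. - ln (cos v)) {0..<pi/4}"
    unfolding LL_def
  proof (intro nn_integral_cong)
    fix x :: real
    have "sin (pi/2 + (-1) * x) = cos x" by (simp add: sin_cos_eq)
    moreover have "(pi/2 + (-1) * x \<in> {pi/4<..pi/2}) = (x \<in> {0..<pi/4})" by auto
    ultimately show "?F (pi/2 + (-1) * x) = ennreal (- ln (cos x)) * indicator {0..<pi/4} x"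
      by (simp split: split_indicator)
  qed
  also have "\<dots> = LL (\<lambda>v. - ln (cos v)) {0..pi/4}"
    by (rule LL_set_AE[where c="pi/4"]) auto
  finally show ?thesis .
qed

lemma catalan_nonneg: "0 \<le> catalan_G"
proof -
  have pnn: "0 \<le> 1 / real (4*j+1) ^ 2 - 1 / real (4*j+3) ^ 2" for j
    by (simp add: divide_simps power_mono)
  have "catalan_G = (\<Sum>j. 1 / real (4*j+1) ^ 2 - 1 / real (4*j+3) ^ 2)"
    using catalan_pairs by (simp add: sums_iff)
  also have "\<dots> \<ge> 0" using catalan_pairs pnn by (intro suminf_nonneg) (auto simp: sums_iff)
  finally show ?thesis .
qed

lemma b_val: "integral {0..pi/4} (\<lambda>v. - ln (cos v)) = pi/4 * ln 2 - catalan_G / 2"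
proof -
  define b where "b = integral {0..pi/4} (\<lambda>v. - ln (cos v))"
  define G where "G = catalan_G"
  have b0: "0 \<le> b" unfolding b_def by (rule B_nonneg)
  have G0: "0 \<le> G" unfolding G_def by (rule catalan_nonneg)
  have B: "LL (\<lambda>v. - ln (cos v)) {0..pi/4} = ennreal b" unfolding b_def by (rule B_fin)
  have A: "LL (\<lambda>v. - ln (sin v)) {0..pi/4} = ennreal (G + b)"
  proof -
    have "LL (\<lambda>v. - ln (sin v)) {0..pi/4} = ennreal G + ennreal b" using A_eq unfolding B G_def .
    also have "\<dots> = ennreal (G + b)" by (rule ennreal_plus[symmetric, OF G0 b0])
    finally show ?thesis .
  qed
  define P where "P = LL (\<lambda>v. - ln (sin (2 * v))) {0..pi/4}"
  have e1: "2 * P = ennreal (G + 2 * b)"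
  proof -
    have "2 * P = LL (\<lambda>w. - ln (sin w)) {0..pi/2}" unfolding P_def using P5 by simp
    also have "\<dots> = ennreal (G + b) + ennreal b" unfolding P6 P7 A B ..
    also have "\<dots> = ennreal (G + b + b)" by (rule ennreal_plus[symmetric]) (use G0 b0 in auto)
    finally show ?thesis by (simp add: algebra_simps)
  qed
  have "P < top"
  proof (rule ccontr)
    assume "\<not> P < top"
    then have "P = top" using top.not_eq_extremum by blast
    then have "2 * P = top" by simp
    then show False using e1 by simp
  qed
  then obtain p where p: "P = ennreal p" "0 \<le> p" using less_top_ennreal by blast
  have "ennreal (2 * p) = 2 * P" unfolding p(1) using p(2) by (simp add: ennreal_mult')
  then have "ennreal (2 * p) = ennreal (G + 2 * b)" using e1 by simp
  then have p2: "2 * p = G + 2 * b" using p(2) G0 b0 by (subst (asm) ennreal_inj) auto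
  have "ennreal (G + b) + ennreal b = ennreal (ln 2 * (pi/4)) + ennreal p"
    using P4 unfolding A B P_def[symmetric] p(1) .
  moreover have "ennreal (G + b) + ennreal b = ennreal (G + b + b)"
    by (rule ennreal_plus[symmetric]) (use G0 b0 in auto)
  moreover have "ennreal (ln 2 * (pi/4)) + ennreal p = ennreal (ln 2 * (pi/4) + p)"
    by (rule ennreal_plus[symmetric]) (use p(2) pi_gt_zero in auto)
  ultimately have "ennreal (G + b + b) = ennreal (ln 2 * (pi/4) + p)" by simp
  then have "G + b + b = ln 2 * (pi/4) + p"
    using G0 b0 p(2) pi_gt_zero by (subst (asm) ennreal_inj) auto
  then have "b = pi/4 * ln 2 - G / 2" using p2 by (simp add: field_simps)
  then show ?thesis unfolding b_def G_def .
qed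

lemma B_int: "((\<lambda>v. - ln (cos v)) has_integral integral {0..pi/4} (\<lambda>v. - ln (cos v))) {0..pi/4}"
proof -
  have "continuous_on {0..pi/4} (\<lambda>v. - ln (cos v))"
    using cos_ne_4 by (intro continuous_intros) auto
  then show ?thesis by (intro integrable_integral integrable_continuous_interval)
qed

lemma sin_sq_lt1: assumes "t \<in> {0..pi/2}" "t \<noteq> pi/2" shows "sin t ^ 2 < 1" "sqrt (1 - sin t ^ 2) = cos t"
proof -
  have c: "0 < cos t" using assms by (intro cos_pos_q)
  have e: "1 - sin t ^ 2 = cos t ^ 2" using sin_squared_eq[of t] by simp
  show "sin t ^ 2 < 1" using e c by (smt (verit) zero_less_power)
  show "sqrt (1 - sin t ^ 2) = cos t" unfolding e using c by simp
qed

lemma V_eq: assumes "t \<in> {0..pi/2}"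
  shows "2 / pi * (2 * ln 2 - 2 * ln (1 + cos t)) = 8 / pi * (- ln (cos (t/2)))"
proof -
  have h: "0 \<le> t/2" "t/2 \<le> pi/4" using assms by auto
  have c: "0 < cos (t/2)" using h pi_gt_zero by (intro cos_gt_zero_pi) linarith+
  have "cos (2 * (t/2)) = 2 * cos (t/2) ^ 2 - 1" by (rule cos_double_cos)
  then have "1 + cos t = 2 * cos (t/2) ^ 2" by simp
  then have "ln (1 + cos t) = ln 2 + 2 * ln (cos (t/2))" using c by (simp add: ln_mult ln_realpow)
  then show ?thesis by (simp add: algebra_simps)
qed

lemma X_val: "(\<lambda>k. cb (Suc k)^2 / real (Suc k)) sums (4 * ln 2 - 8 * catalan_G / pi)"
proof -
  define f where "f k t = 2 / pi * (cb (Suc k) * (sin t ^ 2) ^ Suc k / real (Suc k))" for k t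
  define V where "V t = 2 / pi * (2 * ln 2 - 2 * ln (1 + cos t))" for t
  define b where "b = integral {0..pi/4} (\<lambda>v. - ln (cos v))"
  have b0: "0 \<le> b" unfolding b_def by (rule B_nonneg)
  have fnn: "0 \<le> f k t" for k t unfolding f_def using cb_pos[of "Suc k"] pi_gt_zero by simp
  have Ik: "(\<integral>\<^sup>+t. ennreal (f k t) * indicator {0..pi/2} t \<partial>lborel) = ennreal (cb (Suc k)^2 / real (Suc k))" for k
  proof -
    have "((\<lambda>t. sin t ^ (2 * Suc k)) has_integral (pi/2 * cb (Suc k))) {0..pi/2}" by (rule wallis_int)
    then have "((\<lambda>t. (2 / pi * cb (Suc k) / real (Suc k)) * sin t ^ (2 * Suc k)) has_integral
        ((2 / pi * cb (Suc k) / real (Suc k)) * (pi/2 * cb (Suc k)))) {0..pi/2}"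
      by (rule has_integral_mult_right)
    moreover have "(\<lambda>t. (2 / pi * cb (Suc k) / real (Suc k)) * sin t ^ (2 * Suc k)) = f k"
    proof (rule ext)
      fix t :: real
      have p: "sin t ^ (2 * Suc k) = (sin t ^ 2) ^ Suc k" by (rule power_mult)
      show "(2 / pi * cb (Suc k) / real (Suc k)) * sin t ^ (2 * Suc k) = f k t"
        unfolding f_def p by simp
    qed
    moreover have "(2 / pi * cb (Suc k) / real (Suc k)) * (pi/2 * cb (Suc k)) = cb (Suc k)^2 / real (Suc k)"
    proof -
      have "0 < pi + pi * real k" using pi_gt_zero by (simp add: add_pos_nonneg)
      then show ?thesis using pi_gt_zero by (simp add: field_simps power2_eq_square)
    qed
    ultimately have "(f k has_integral (cb (Suc k)^2 / real (Suc k))) {0..pi/2}" by simp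
    from nn_integral_has_integral_lebesgue'[OF _ this] fnn show ?thesis by simp
  qed
  have "(\<Sum>k. ennreal (cb (Suc k)^2 / real (Suc k))) = (\<Sum>k. \<integral>\<^sup>+t. ennreal (f k t) * indicator {0..pi/2} t \<partial>lborel)"
    unfolding Ik ..
  also have "\<dots> = (\<integral>\<^sup>+t. (\<Sum>k. ennreal (f k t) * indicator {0..pi/2} t) \<partial>lborel)"
    by (rule nn_integral_suminf[symmetric]) (simp add: f_def)
  also have "\<dots> = (\<integral>\<^sup>+t. ennreal (V t) * indicator {0..pi/2} t \<partial>lborel)"
  proof (rule nn_integral_cong_AE)
    show "AE t in lborel. (\<Sum>k. ennreal (f k t) * indicator {0..pi/2} t) = ennreal (V t) * indicator {0..pi/2} t"
      using AE_lborel_singleton[of "pi/2"]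
    proof eventually_elim
      case (elim t)
      show ?case
      proof (cases "t \<in> {0..pi/2}")
        case True
        have s: "0 \<le> sin t ^ 2" "sin t ^ 2 < 1" using sin_sq_lt1[OF True elim] by auto
        have "(\<lambda>k. 2 / pi * (cb (Suc k) * (sin t ^ 2) ^ Suc k / real (Suc k))) sums
            (2 / pi * (2 * ln 2 - 2 * ln (1 + sqrt (1 - sin t ^ 2))))"
          by (rule sums_mult[OF h_series[OF s]])
        then have "(\<lambda>k. f k t) sums V t" unfolding f_def V_def sin_sq_lt1(2)[OF True elim] .
        then have "(\<Sum>k. ennreal (f k t)) = ennreal (V t)" using fnn by (intro suminf_ennreal_eq) auto
        then show ?thesis using True by simp
      next
        case False then show ?thesis by simp
      qed
    qed
  qed
  also have "\<dots> = (\<integral>\<^sup>+t. ennreal (8 / pi * (- ln (cos (t/2)))) * indicator {0..pi/2} t \<partial>lborel)"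
  proof (intro nn_integral_cong)
    fix t :: real
    show "ennreal (V t) * indicator {0..pi/2} t = ennreal (8 / pi * (- ln (cos (t/2)))) * indicator {0..pi/2} t"
    proof (cases "t \<in> {0..pi/2}")
      case True then show ?thesis unfolding V_def V_eq[OF True] by simp
    next
      case False then show ?thesis by simp
    qed
  qed
  also have "\<dots> = ennreal 2 * (\<integral>\<^sup>+x. ennreal (8 / pi * (- ln (cos ((0 + 2 * x)/2)))) * indicator {0..pi/2} (0 + 2 * x) \<partial>lborel)"
  proof -
    have m: "(\<lambda>t::real. ennreal (8 / pi * (- ln (cos (t/2)))) * indicator {0..pi/2} t) \<in> borel_measurable borel"
      by measurable
    show ?thesis using nn_integral_real_affine[OF m, of 2 0] by simp
  qed
  also have "(\<integral>\<^sup>+x. ennreal (8 / pi * (- ln (cos ((0 + 2 * x)/2)))) * indicator {0..pi/2} (0 + 2 * x) \<partial>lborel)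
      = (\<integral>\<^sup>+x. ennreal (8 / pi * (- ln (cos x))) * indicator {0..pi/4} x \<partial>lborel)"
    by (intro nn_integral_cong) (auto split: split_indicator)
  also have "\<dots> = ennreal (8 / pi * b)"
  proof (rule nn_integral_has_integral_lebesgue')
    show "0 \<le> 8 / pi * (- ln (cos x))" if "x \<in> {0..pi/4}" for x
    proof -
      have "ln (cos x) \<le> 0" using cos_pos_4[OF that] by simp
      then show ?thesis using pi_gt_zero by (simp add: divide_nonpos_pos)
    qed
    show "((\<lambda>x. 8 / pi * (- ln (cos x))) has_integral 8 / pi * b) {0..pi/4}"
      unfolding b_def by (rule has_integral_mult_right[OF B_int])
  qed
  also have "ennreal 2 * ennreal (8 / pi * b) = ennreal (4 * ln 2 - 8 * catalan_G / pi)"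
  proof -
    have "2 * (8 / pi * b) = 4 * ln 2 - 8 * catalan_G / pi"
      unfolding b_def b_val using pi_gt_zero by (simp add: field_simps)
    moreover have "ennreal 2 * ennreal (8 / pi * b) = ennreal (2 * (8 / pi * b))"
      by (rule ennreal_mult[symmetric]) (use b0 pi_gt_zero in auto)
    ultimately show ?thesis by simp
  qed
  finally have e: "(\<Sum>k. ennreal (cb (Suc k)^2 / real (Suc k))) = ennreal (4 * ln 2 - 8 * catalan_G / pi)" .
  have "0 \<le> 2 * (8 / pi * b)" using b0 pi_gt_zero by simp
  moreover have "2 * (8 / pi * b) = 4 * ln 2 - 8 * catalan_G / pi"
    unfolding b_def b_val using pi_gt_zero by (simp add: field_simps)
  ultimately have "0 \<le> 4 * ln 2 - 8 * catalan_G / pi" by simp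
  then show ?thesis using e by (intro enn_sums) auto
qed

theorem corollaryB10:
  shows "(\<lambda>m. let n = Suc m in central_binom_norm n ^ 2 * harm3 n / (2 * real n - 1))
     sums ((2 / pi) * (16 * catalan_G + 4 * pi - 8 * pi * ln 2 - zeta3 - 8))"
proof -
  have s1: "(\<lambda>n. cb (Suc n)^2 / (2 * real (Suc n) - 1)) sums (1 - 2 / pi)"
    unfolding sums_def sumA by (intro tendsto_intros cc_lim)
  have s2: "(\<lambda>k. cc k / real (Suc k) ^ 3) sums (8 * (1 - 2 / pi) - 4 * (4 * ln 2 - 8 * catalan_G / pi))"
    unfolding cc_div by (intro sums_diff sums_mult s1 X_val)
  have "(\<lambda>N. (\<Sum>k<N. cc k / real (Suc k) ^ 3) - cc N * harm3 N) \<longlonglongrightarrow>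
      (8 * (1 - 2 / pi) - 4 * (4 * ln 2 - 8 * catalan_G / pi)) - 2 / pi * zeta3"
    using s2 unfolding sums_def by (intro tendsto_intros cc_lim harm3_lim)
  moreover have "(8 * (1 - 2 / pi) - 4 * (4 * ln 2 - 8 * catalan_G / pi)) - 2 / pi * zeta3
     = (2 / pi) * (16 * catalan_G + 4 * pi - 8 * pi * ln 2 - zeta3 - 8)"
    using pi_gt_zero by (simp add: field_simps)
  ultimately show ?thesis unfolding sums_def Let_def partial by simp
qed

end
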